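(* Let $s\ge1$ and let $G=\mathbb{Z}_2*\cdots*\mathbb{Z}_2$ be the free product of $s$ copies of $\mathbb{Z}_2$, with generators $g_1,\dots,g_s$ ($g_i^2=e$). Let $\lambda$ be the left regular representation of $G$ on $\ell_2(G)$, $\lambda(g)|g'\rangle=|gg'\rangle$. For each $i$ let $P_i^{\pm}=(\mathbb{1}\pm\lambda(g_i))/2$ (projectors) and define the channel $$\Omega(\sigma)=\frac1s\sum_{i=1}^s\big(P_i^+\sigma P_i^++P_i^-\sigma P_i^-\big).$$ Then the associated superoperator $\overline{\Omega}=\frac12\big(\frac1s\sum_{i=1}^s\lambda(g_i)\otimes\lambda(g_i)^*+\mathbb{1}\big)$ on $\ell_2(G)\otimes\ell_2(G)$ satisfies $\|\overline{\Omega}\|\le\frac12+\frac1{\sqrt s}$. In particular, if $s\ge5$, then $\mu:=\|\overline{\Omega}\|<1$ and for every density operator $\sigma$ on $\ell_2(G)$ and every $N\in\mathbb{N}$, $\mathrm{tr}\{[\Omega^N(\sigma)]^2\}\le\mu^{2N}\,\mathrm{tr}\{\sigma^2\}\le\mu^{2N}$.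
   Context: Fixing the orthonormal basis $\{|g\rangle:g\in G\}$ of $\ell_2(G)$, a Hilbert–Schmidt operator $\sigma=\sum_{g,h}\sigma_{gh}|g\rangle\langle h|$ is identified with $|\sigma\rangle=\sum\sigma_{gh}|g\rangle|h\rangle\in\ell_2(G)\otimes\ell_2(G)$, and $\overline{\Omega}$ is the operator with $\overline{\Omega}|\sigma\rangle=|\Omega(\sigma)\rangle$; $A^*$ denotes entrywise complex conjugate in this basis. $\|\cdot\|$ is the operator norm. *)

theory Defs
  imports "HOL-Analysis.Analysis"
begin

text \<open>Elements of G are reduced words over the letters 0..s-1 (letter i stands for g_(i+1)),
  i.e. lists with no two adjacent equal letters; the empty word is e.\<close>

definition FP :: "nat \<Rightarrow> nat list set" where
  "FP s = {w. set w \<subseteq> {..<s} \<and> successively (\<noteq>) w}"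

definition gen_mult :: "nat \<Rightarrow> nat list \<Rightarrow> nat list" where
  "gen_mult i w = (if w \<noteq> [] \<and> hd w = i then tl w else i # w)"

text \<open>Matrix of lambda(g_i) in the basis |g>: entry (x,u) = <x|lambda(g_i)|u>.\<close>
definition lam_ker :: "nat \<Rightarrow> nat list \<Rightarrow> nat list \<Rightarrow> complex" where
  "lam_ker i x u = (if x = gen_mult i u then 1 else 0)"

definition id_ker :: "'a \<Rightarrow> 'a \<Rightarrow> complex" where
  "id_ker x u = (if x = u then 1 else 0)"

definition conj_ker :: "('a \<Rightarrow> 'b \<Rightarrow> complex) \<Rightarrow> 'a \<Rightarrow> 'b \<Rightarrow> complex" where
  "conj_ker A x u = cnj (A x u)"

definition tensor_ker ::
  "('a \<Rightarrow> 'a \<Rightarrow> complex) \<Rightarrow> ('b \<Rightarrow> 'b \<Rightarrow> complex) \<Rightarrow> ('a \<times> 'b) \<Rightarrow> ('a \<times> 'b) \<Rightarrow> complex" where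
  "tensor_ker A B p q = A (fst p) (fst q) * B (snd p) (snd q)"

definition kapply :: "'a set \<Rightarrow> ('a \<Rightarrow> 'a \<Rightarrow> complex) \<Rightarrow> ('a \<Rightarrow> complex) \<Rightarrow> 'a \<Rightarrow> complex" where
  "kapply S K F p = (\<Sum>\<^sub>\<infinity>q\<in>S. K p q * F q)"

definition kmult :: "'a set \<Rightarrow> ('a \<Rightarrow> 'a \<Rightarrow> complex) \<Rightarrow> ('a \<Rightarrow> 'a \<Rightarrow> complex) \<Rightarrow> 'a \<Rightarrow> 'a \<Rightarrow> complex" where
  "kmult S A B x y = (\<Sum>\<^sub>\<infinity>u\<in>S. A x u * B u y)"

definition l2 :: "'a set \<Rightarrow> ('a \<Rightarrow> complex) set" where
  "l2 S = {F. (\<forall>q. q \<notin> S \<longrightarrow> F q = 0) \<and> (\<lambda>q. (norm (F q))\<^sup>2) summable_on S}"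

definition l2norm :: "'a set \<Rightarrow> ('a \<Rightarrow> complex) \<Rightarrow> real" where
  "l2norm S F = sqrt (\<Sum>\<^sub>\<infinity>q\<in>S. (norm (F q))\<^sup>2)"

definition opnorm :: "'a set \<Rightarrow> (('a \<Rightarrow> complex) \<Rightarrow> ('a \<Rightarrow> complex)) \<Rightarrow> real" where
  "opnorm S T = Sup {l2norm S (T F) | F. F \<in> l2 S \<and> l2norm S F \<le> 1}"

text \<open>P_i^+ (sg = 1) and P_i^- (sg = -1): (1 +- lambda(g_i))/2.\<close>
definition P_ker :: "nat \<Rightarrow> complex \<Rightarrow> nat list \<Rightarrow> nat list \<Rightarrow> complex" where
  "P_ker i sg x u = (id_ker x u + sg * lam_ker i x u) / 2"

definition Omega :: "nat \<Rightarrow> (nat list \<Rightarrow> nat list \<Rightarrow> complex) \<Rightarrow> nat list \<Rightarrow> nat list \<Rightarrow> complex" where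
  "Omega s \<sigma> = (\<lambda>x y. (1 / of_nat s) * (\<Sum>i<s.
      kmult (FP s) (kmult (FP s) (P_ker i 1) \<sigma>) (P_ker i 1) x y
    + kmult (FP s) (kmult (FP s) (P_ker i (-1)) \<sigma>) (P_ker i (-1)) x y))"

text \<open>Omega_bar = 1/2 (1/s sum_i lambda(g_i) (x) lambda(g_i)^* + 1) on l2(G) (x) l2(G) = l2(G x G).\<close>
definition Omega_bar ::
  "nat \<Rightarrow> (nat list \<times> nat list \<Rightarrow> complex) \<Rightarrow> (nat list \<times> nat list \<Rightarrow> complex)" where
  "Omega_bar s F = (\<lambda>p. (1/2) * ((1 / of_nat s) *
      (\<Sum>i<s. kapply (FP s \<times> FP s) (tensor_ker (lam_ker i) (conj_ker (lam_ker i))) F p) + F p))"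

definition mu :: "nat \<Rightarrow> real" where
  "mu s = opnorm (FP s \<times> FP s) (Omega_bar s)"

text \<open>A density operator on l2(S), given by its matrix: supported on S x S, Hermitian,
  positive semidefinite (on finitely supported vectors, which is dense), trace-class
  with trace 1 (summable diagonal summing to 1).\<close>
definition density_op :: "'a set \<Rightarrow> ('a \<Rightarrow> 'a \<Rightarrow> complex) \<Rightarrow> bool" where
  "density_op S \<sigma> \<longleftrightarrow>
     (\<forall>x y. x \<notin> S \<or> y \<notin> S \<longrightarrow> \<sigma> x y = 0) \<and>
     (\<forall>x y. \<sigma> y x = cnj (\<sigma> x y)) \<and>
     (\<forall>A f. finite A \<longrightarrow> A \<subseteq> S \<longrightarrow>
        0 \<le> Re (\<Sum>x\<in>A. \<Sum>y\<in>A. cnj (f x) * \<sigma> x y * f y)) \<and>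
     (\<lambda>x. \<sigma> x x) summable_on S \<and> (\<Sum>\<^sub>\<infinity>x\<in>S. \<sigma> x x) = 1"

definition tr_sq :: "'a set \<Rightarrow> ('a \<Rightarrow> 'a \<Rightarrow> complex) \<Rightarrow> real" where
  "tr_sq S \<sigma> = Re (\<Sum>\<^sub>\<infinity>(x,y)\<in>S \<times> S. \<sigma> x y * \<sigma> y x)"

end

theory Submission
  imports Defs
begin


lemma gm_in: assumes "i < s" "w \<in> FP s" shows "gen_mult i w \<in> FP s"
  using assms unfolding FP_def gen_mult_def
  by (cases w) (auto simp: successively_Cons)

lemma gm_inv: assumes "w \<in> FP s" shows "gen_mult i (gen_mult i w) = w"
  using assms unfolding FP_def gen_mult_def
  by (cases w; cases "tl w") (auto simp: successively_Cons)

lemma gm_neq: "gen_mult i w \<noteq> w"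
proof -
  have "length (gen_mult i w) \<noteq> length w" unfolding gen_mult_def by (cases w) auto
  thus ?thesis by metis
qed

lemma gm_hd: assumes "w \<in> FP s"
  shows "(gen_mult i w \<noteq> [] \<and> hd (gen_mult i w) = i) \<longleftrightarrow> \<not> (w \<noteq> [] \<and> hd w = i)"
  using assms unfolding FP_def gen_mult_def
  by (cases w; cases "tl w") (auto simp: successively_Cons)

lemma infsum_single:
  fixes f :: "'a \<Rightarrow> 'b::{comm_monoid_add,t2_space}"
  assumes "a \<in> A" "\<And>x. x \<in> A \<Longrightarrow> x \<noteq> a \<Longrightarrow> f x = 0"
  shows "infsum f A = f a"
proof -
  have "(f has_sum (\<Sum>x\<in>{a}. f x)) A"
    by (rule has_sum_finite_neutralI[where B="{a}"]) (use assms in auto)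
  thus ?thesis by (simp add: infsumI)
qed

lemma infsum_two:
  fixes f :: "'a \<Rightarrow> 'b::{comm_monoid_add,t2_space}"
  assumes "a \<in> A" "b \<in> A" "a \<noteq> b" "\<And>x. x \<in> A \<Longrightarrow> x \<noteq> a \<Longrightarrow> x \<noteq> b \<Longrightarrow> f x = 0"
  shows "infsum f A = f a + f b"
proof -
  have "(f has_sum (\<Sum>x\<in>{a,b}. f x)) A"
    by (rule has_sum_finite_neutralI[where B="{a,b}"]) (use assms in auto)
  thus ?thesis using assms(3) by (simp add: infsumI)
qed

definition phi :: "nat \<Rightarrow> nat list \<times> nat list \<Rightarrow> nat list \<times> nat list" where
  "phi i p = (gen_mult i (fst p), gen_mult i (snd p))"

lemma phi_in: "i < s \<Longrightarrow> p \<in> FP s \<times> FP s \<Longrightarrow> phi i p \<in> FP s \<times> FP s"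
  by (auto simp: phi_def gm_in)

lemma phi_inv: "p \<in> FP s \<times> FP s \<Longrightarrow> phi i (phi i p) = p"
  by (auto simp: phi_def gm_inv)

lemma kapply_lam:
  assumes "i < s" "p \<in> FP s \<times> FP s"
  shows "kapply (FP s \<times> FP s) (tensor_ker (lam_ker i) (conj_ker (lam_ker i))) F p = F (phi i p)"
  unfolding kapply_def
proof (subst infsum_single[where a="phi i p"])
  show "phi i p \<in> FP s \<times> FP s" using phi_in assms by blast
  fix q assume q: "q \<in> FP s \<times> FP s" "q \<noteq> phi i p"
  have "fst p \<noteq> gen_mult i (fst q) \<or> snd p \<noteq> gen_mult i (snd q)"
    using q assms gm_inv[of "fst q" s i] gm_inv[of "snd q" s i]
    by (cases q, auto simp: phi_def)
  thus "tensor_ker (lam_ker i) (conj_ker (lam_ker i)) p q * F q = 0"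
    by (auto simp: tensor_ker_def lam_ker_def conj_ker_def)
next
  show "tensor_ker (lam_ker i) (conj_ker (lam_ker i)) p (phi i p) * F (phi i p) = F (phi i p)"
    using assms gm_inv[of "fst p" s i] gm_inv[of "snd p" s i]
    by (auto simp: tensor_ker_def lam_ker_def conj_ker_def phi_def)
qed

lemma Omega_bar_eq:
  assumes "p \<in> FP s \<times> FP s"
  shows "Omega_bar s F p = (1/2) * ((1 / of_nat s) * (\<Sum>i<s. F (phi i p)) + F p)"
  unfolding Omega_bar_def using kapply_lam[OF _ assms] by simp



lemma infsum_fsum:
  fixes f :: "'i \<Rightarrow> 'a \<Rightarrow> real"
  assumes "finite I" "\<And>i. i \<in> I \<Longrightarrow> f i summable_on A"
  shows "(\<lambda>x. \<Sum>i\<in>I. f i x) summable_on A \<and> infsum (\<lambda>x. \<Sum>i\<in>I. f i x) A = (\<Sum>i\<in>I. infsum (f i) A)"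
  using assms
proof (induction I rule: finite_induct)
  case empty then show ?case by simp
next
  case (insert j I)
  then have h: "(\<lambda>x. \<Sum>i\<in>I. f i x) summable_on A" "infsum (\<lambda>x. \<Sum>i\<in>I. f i x) A = (\<Sum>i\<in>I. infsum (f i) A)"
    and fj: "f j summable_on A" by auto
  show ?case using insert(1,2) h fj
    by (simp add: summable_on_add infsum_add)
qed

lemma cs_norm:
  fixes c :: "'i \<Rightarrow> complex"
  shows "(norm (\<Sum>i\<in>I. c i))\<^sup>2 \<le> real (card I) * (\<Sum>i\<in>I. (norm (c i))\<^sup>2)"
proof -
  have "norm (\<Sum>i\<in>I. c i) \<le> (\<Sum>i\<in>I. norm (c i))" by (rule norm_sum)
  hence "(norm (\<Sum>i\<in>I. c i))\<^sup>2 \<le> (\<Sum>i\<in>I. norm (c i))\<^sup>2"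
    by (simp add: power_mono)
  also have "\<dots> \<le> (\<Sum>i\<in>I. (norm (c i))\<^sup>2) * card I" by (rule sum_squared_le_sum_of_squares)
  finally show ?thesis by (simp add: mult.commute)
qed

lemma sq_add_le:
  fixes a b :: complex and t :: real
  assumes "t > 0"
  shows "(norm (a + b))\<^sup>2 \<le> (1 + t) * (norm a)\<^sup>2 + (1 + 1/t) * (norm b)\<^sup>2"
proof -
  define x where "x = norm a" define y where "y = norm b"
  have "norm (a+b) \<le> x + y" unfolding x_def y_def by (rule norm_triangle_ineq)
  hence "(norm (a+b))\<^sup>2 \<le> (x + y)\<^sup>2" by (simp add: power_mono)
  also have "\<dots> \<le> (1 + t) * x\<^sup>2 + (1 + 1/t) * y\<^sup>2"
  proof -
    have "0 \<le> (t*x - y)\<^sup>2 / t" using assms by simp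
    also have "(t*x - y)\<^sup>2 / t = t * x\<^sup>2 - 2*x*y + y\<^sup>2/t" using assms
      by (simp add: field_simps power2_eq_square)
    finally show ?thesis by (simp add: algebra_simps power2_eq_square)
  qed
  finally show ?thesis unfolding x_def y_def .
qed

lemma card_le1_sum:
  fixes a :: real and s :: nat and w :: "nat list"
  assumes "a \<ge> 0"
  shows "(\<Sum>i<s. if w \<noteq> [] \<and> hd w = i then a else 0) \<le> a"
proof -
  have "(\<Sum>i<s. if w \<noteq> [] \<and> hd w = i then a else 0) = (\<Sum>i\<in>{i\<in>{..<s}. w \<noteq> [] \<and> hd w = i}. a)"
    by (subst sum.inter_filter) auto
  also have "\<dots> = real (card {i\<in>{..<s}. w \<noteq> [] \<and> hd w = i}) * a" by simp
  also have "card {i\<in>{..<s}. w \<noteq> [] \<and> hd w = i} \<le> 1"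
  proof -
    have "{i\<in>{..<s}. w \<noteq> [] \<and> hd w = i} \<subseteq> {hd w}" by auto
    thus ?thesis using card_mono[of "{hd w}"] by fastforce
  qed
  hence "real (card {i\<in>{..<s}. w \<noteq> [] \<and> hd w = i}) * a \<le> 1 * a"
    using assms by (intro mult_right_mono) auto
  finally show ?thesis by simp
qed

lemma main_bound:
  fixes s :: nat and F :: "nat list \<times> nat list \<Rightarrow> complex"
  defines "S \<equiv> FP s \<times> FP s"
  assumes s1: "s \<ge> 1" and FS: "(\<lambda>q. (norm (F q))\<^sup>2) summable_on S"
  shows "(\<lambda>p. (norm (Omega_bar s F p))\<^sup>2) summable_on S \<and>
    infsum (\<lambda>p. (norm (Omega_bar s F p))\<^sup>2) S \<le> (1/2 + 1 / sqrt (real s))\<^sup>2 * infsum (\<lambda>q. (norm (F q))\<^sup>2) S"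
proof -
  define N where "N = infsum (\<lambda>q. (norm (F q))\<^sup>2) S"
  define w where "w (i::nat) p = (norm (F (phi i p)))\<^sup>2" for i p
  define e where "e (i::nat) (p::nat list \<times> nat list) = (fst p \<noteq> [] \<and> hd (fst p) = i)" for i p
  define we where "we i p = (if e i p then w i p else 0)" for i p
  define wn where "wn i p = (if e i p then 0 else w i p)" for i p
  define H where "H p = (\<Sum>i<s. F (phi i p))" for p
  have wS: "w i summable_on S \<and> infsum (w i) S = N" if "i < s" for i
  proof -
    have 1: "\<And>a. a \<in> S \<Longrightarrow> phi i (phi i a) = a" "\<And>a. a \<in> S \<Longrightarrow> phi i a \<in> S"
      using phi_inv phi_in that unfolding S_def by blast+
    show ?thesis
      using summable_on_reindex_bij_witness[of S "phi i" "phi i" S "\<lambda>q. (norm (F q))\<^sup>2" "w i", OF 1 1]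
        infsum_reindex_bij_witness[of S "phi i" "phi i" S "\<lambda>q. (norm (F q))\<^sup>2" "w i", OF 1 1]
        FS unfolding w_def N_def by auto
  qed
  have weS: "we i summable_on S" "infsum (we i) S \<le> N" if "i < s" for i
  proof -
    show ws: "we i summable_on S"
      by (rule summable_on_comparison_test[OF wS[OF that, THEN conjunct1]]) (auto simp: we_def w_def)
    have "infsum (we i) S \<le> infsum (w i) S"
      by (rule infsum_mono[OF ws wS[OF that, THEN conjunct1]]) (auto simp: we_def w_def)
    thus "infsum (we i) S \<le> N" using wS[OF that] by simp
  qed
  define g where "g (i::nat) q = (if e i q then (norm (F q))\<^sup>2 else 0)" for i q
  have gS: "g i summable_on S" for i
    by (rule summable_on_comparison_test[OF FS]) (auto simp: g_def)
  have wnS: "wn i summable_on S \<and> infsum (wn i) S = infsum (g i) S" if "i < s" for i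
  proof -
    have 1: "\<And>a. a \<in> S \<Longrightarrow> phi i (phi i a) = a" "\<And>a. a \<in> S \<Longrightarrow> phi i a \<in> S"
      using phi_inv phi_in that unfolding S_def by blast+
    have 2: "\<And>a. a \<in> S \<Longrightarrow> wn i (phi i a) = g i a"
    proof -
      fix a assume a: "a \<in> S"
      have "e i (phi i a) \<longleftrightarrow> \<not> e i a"
        using gm_hd[of "fst a" s i] a unfolding e_def phi_def S_def by auto
      thus "wn i (phi i a) = g i a" using phi_inv[of a s i] a
        unfolding wn_def g_def w_def S_def by auto
    qed
    show ?thesis
      using summable_on_reindex_bij_witness[of S "phi i" "phi i" S "wn i" "g i", OF 1 1 2]
        infsum_reindex_bij_witness[of S "phi i" "phi i" S "wn i" "g i", OF 1 1 2]
        gS by auto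
  qed
  have gsum: "(\<Sum>i<s. infsum (g i) S) \<le> N"
  proof -
    have "(\<Sum>i<s. infsum (g i) S) = infsum (\<lambda>q. \<Sum>i<s. g i q) S"
      using infsum_fsum[of "{..<s}" g S] gS by simp
    also have "\<dots> \<le> N" unfolding N_def
    proof (rule infsum_mono)
      show "(\<lambda>q. \<Sum>i<s. g i q) summable_on S" using infsum_fsum[of "{..<s}" g S] gS by simp
      show "(\<lambda>q. (norm (F q))\<^sup>2) summable_on S" by (rule FS)
      fix q show "(\<Sum>i<s. g i q) \<le> (norm (F q))\<^sup>2"
        unfolding g_def e_def by (rule card_le1_sum) simp
    qed
    finally show ?thesis .
  qed
  define B where "B p = 2 * (\<Sum>i<s. we i p) + 2 * real s * (\<Sum>i<s. wn i p)" for p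
  have BS: "B summable_on S" "infsum B S \<le> 4 * real s * N"
  proof -
    have a1: "(\<lambda>p. \<Sum>i<s. we i p) summable_on S" "infsum (\<lambda>p. \<Sum>i<s. we i p) S = (\<Sum>i<s. infsum (we i) S)"
      using infsum_fsum[of "{..<s}" we S] weS by auto
    have a2: "(\<lambda>p. \<Sum>i<s. wn i p) summable_on S" "infsum (\<lambda>p. \<Sum>i<s. wn i p) S = (\<Sum>i<s. infsum (wn i) S)"
      using infsum_fsum[of "{..<s}" wn S] wnS by auto
    show "B summable_on S" unfolding B_def
      by (intro summable_on_add summable_on_cmult_right a1 a2)
    have "infsum B S = 2 * (\<Sum>i<s. infsum (we i) S) + 2 * real s * (\<Sum>i<s. infsum (wn i) S)"
      unfolding B_def
      by (subst infsum_add) (auto intro!: summable_on_cmult_right a1 a2 simp: infsum_cmult_right a1 a2)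
    also have "(\<Sum>i<s. infsum (we i) S) \<le> (\<Sum>i<s. N)" by (rule sum_mono) (use weS in auto)
    also have "(\<Sum>i<s. infsum (wn i) S) = (\<Sum>i<s. infsum (g i) S)" by (rule sum.cong) (use wnS in auto)
    finally have "infsum B S \<le> 2 * (real s * N) + 2 * real s * (\<Sum>i<s. infsum (g i) S)" by simp
    moreover have "2 * real s * (\<Sum>i<s. infsum (g i) S) \<le> 2 * real s * N"
      using gsum by (intro mult_left_mono) auto
    ultimately show "infsum B S \<le> 4 * real s * N" by linarith
  qed
  have Hpt: "(norm (H p))\<^sup>2 \<le> B p" if "p \<in> S" for p
  proof -
    define E where "E = {i\<in>{..<s}. e i p}"
    define NE where "NE = {i\<in>{..<s}. \<not> e i p}"
    have "H p = (\<Sum>i\<in>E. F (phi i p)) + (\<Sum>i\<in>NE. F (phi i p))"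
      unfolding H_def E_def NE_def by (subst sum.union_disjoint[symmetric]) (auto intro: sum.cong)
    hence "(norm (H p))\<^sup>2 \<le> 2 * (norm (\<Sum>i\<in>E. F (phi i p)))\<^sup>2 + 2 * (norm (\<Sum>i\<in>NE. F (phi i p)))\<^sup>2"
      using sq_add_le[of 1] by simp
    also have "(norm (\<Sum>i\<in>E. F (phi i p)))\<^sup>2 \<le> (\<Sum>i<s. we i p)"
    proof -
      have "card E \<le> 1"
      proof -
        have "E \<subseteq> {hd (fst p)}" unfolding E_def e_def by auto
        thus ?thesis using card_mono[of "{hd (fst p)}"] by fastforce
      qed
      have "(norm (\<Sum>i\<in>E. F (phi i p)))\<^sup>2 \<le> real (card E) * (\<Sum>i\<in>E. w i p)"
        using cs_norm unfolding w_def by blast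
      also have "\<dots> \<le> 1 * (\<Sum>i\<in>E. w i p)"
        using \<open>card E \<le> 1\<close> by (intro mult_right_mono sum_nonneg) (auto simp: w_def)
      also have "\<dots> = (\<Sum>i<s. we i p)" unfolding E_def we_def using sum.inter_filter[of "{..<s}" "\<lambda>i. w i p" "\<lambda>i. e i p"] by simp
      finally show ?thesis .
    qed
    also have "(norm (\<Sum>i\<in>NE. F (phi i p)))\<^sup>2 \<le> real s * (\<Sum>i<s. wn i p)"
    proof -
      have "card NE \<le> s" using card_mono[of "{..<s}" NE] unfolding NE_def by auto
      have "(norm (\<Sum>i\<in>NE. F (phi i p)))\<^sup>2 \<le> real (card NE) * (\<Sum>i\<in>NE. w i p)"
        using cs_norm unfolding w_def by blast
      also have "\<dots> \<le> real s * (\<Sum>i\<in>NE. w i p)"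
        using \<open>card NE \<le> s\<close> by (intro mult_right_mono sum_nonneg) (auto simp: w_def)
      also have "(\<Sum>i\<in>NE. w i p) = (\<Sum>i<s. wn i p)" unfolding NE_def wn_def
        using sum.inter_filter[of "{..<s}" "\<lambda>i. w i p" "\<lambda>i. \<not> e i p"] by simp (intro sum.cong; auto)
      finally show ?thesis .
    qed
    finally show ?thesis unfolding B_def by simp
  qed
  have BN: "0 \<le> B p" for p unfolding B_def we_def wn_def w_def
    by (intro add_nonneg_nonneg mult_nonneg_nonneg sum_nonneg) auto
  have HS: "(\<lambda>p. (norm (H p))\<^sup>2) summable_on S"
    by (rule summable_on_comparison_test[OF BS(1)]) (use Hpt in auto)
  have HI: "infsum (\<lambda>p. (norm (H p))\<^sup>2) S \<le> 4 * real s * N"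
    using infsum_mono[OF HS BS(1) Hpt] BS(2) by linarith
  have N0: "N \<ge> 0" unfolding N_def by (rule infsum_nonneg) simp
  define r where "r = sqrt (real s)"
  have r0: "r > 0" and rs: "r\<^sup>2 = real s" using s1 unfolding r_def by auto
  define t where "t = r / 2"
  have t0: "t > 0" using r0 t_def by simp
  define R where "R p = (1/4) * ((1 + t) / (real s)\<^sup>2 * (norm (H p))\<^sup>2 + (1 + 1/t) * (norm (F p))\<^sup>2)" for p
  have pt: "(norm (Omega_bar s F p))\<^sup>2 \<le> R p" if "p \<in> S" for p
  proof -
    have "Omega_bar s F p = (1/2) * ((1 / of_nat s) * H p + F p)"
      using Omega_bar_eq[of p s F] that unfolding S_def H_def by simp
    hence "(norm (Omega_bar s F p))\<^sup>2 = (1/4) * (norm ((1 / of_nat s) * H p + F p))\<^sup>2"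
      unfolding norm_mult by (simp only:) (simp add: power_divide)
    also have "\<dots> \<le> (1/4) * ((1 + t) * (norm ((1 / of_nat s) * H p))\<^sup>2 + (1 + 1/t) * (norm (F p))\<^sup>2)"
      using sq_add_le[OF t0] by (intro mult_left_mono) auto
    also have "(norm ((1 / of_nat s) * H p))\<^sup>2 = (norm (H p))\<^sup>2 / (real s)\<^sup>2"
      by (simp add: norm_mult norm_divide power_divide)
    finally show ?thesis unfolding R_def by simp
  qed
  have RS: "R summable_on S" unfolding R_def
    by (intro summable_on_cmult_right summable_on_add HS FS)
  define k1 where "k1 = (1 + t) / (real s)\<^sup>2"
  define k2 where "k2 = 1 + 1/t"
  have RR: "R = (\<lambda>p. (1/4) * (k1 * (norm (H p))\<^sup>2 + k2 * (norm (F p))\<^sup>2))"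
    unfolding R_def k1_def k2_def by simp
  have s1': "(\<lambda>p. k1 * (norm (H p))\<^sup>2) summable_on S" by (intro summable_on_cmult_right HS)
  have s2': "(\<lambda>p. k2 * (norm (F p))\<^sup>2) summable_on S" by (intro summable_on_cmult_right FS)
  have "infsum R S = (1/4) * infsum (\<lambda>p. k1 * (norm (H p))\<^sup>2 + k2 * (norm (F p))\<^sup>2) S"
    unfolding RR by (rule infsum_cmult_right) (intro summable_on_add s1' s2')
  also have "infsum (\<lambda>p. k1 * (norm (H p))\<^sup>2 + k2 * (norm (F p))\<^sup>2) S
     = k1 * infsum (\<lambda>p. (norm (H p))\<^sup>2) S + k2 * N"
    unfolding N_def by (simp add: infsum_add[OF s1' s2'] infsum_cmult_right HS FS)
  finally have RI: "infsum R S = (1/4) * ((1 + t) / (real s)\<^sup>2 * infsum (\<lambda>p. (norm (H p))\<^sup>2) S + (1 + 1/t) * N)"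
    unfolding k1_def k2_def .
  also have "(1/4) * ((1 + t) / (real s)\<^sup>2 * infsum (\<lambda>p. (norm (H p))\<^sup>2) S + (1 + 1/t) * N) \<le> (1/4) * ((1 + t) / (real s)\<^sup>2 * (4 * real s * N) + (1 + 1/t) * N)"
    using HI t0 by (intro mult_left_mono add_right_mono) (auto intro!: mult_left_mono)
  also have "\<dots> = (1/2 + 1/r)\<^sup>2 * N"
    unfolding t_def using r0 by (simp add: rs[symmetric] field_simps power2_eq_square)
  finally have RI': "infsum R S \<le> (1/2 + 1/r)\<^sup>2 * N" .
  have OS: "(\<lambda>p. (norm (Omega_bar s F p))\<^sup>2) summable_on S"
    by (rule summable_on_comparison_test[OF RS]) (use pt in auto)
  have "infsum (\<lambda>p. (norm (Omega_bar s F p))\<^sup>2) S \<le> infsum R S"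
    by (rule infsum_mono[OF OS RS pt])
  with RI' OS show ?thesis unfolding r_def N_def by simp
qed


lemma l2norm_nonneg: "l2norm S F \<ge> 0"
  unfolding l2norm_def by (simp add: infsum_nonneg)

lemma elem_bound:
  assumes s1: "s \<ge> 1" and F: "F \<in> l2 (FP s \<times> FP s)" "l2norm (FP s \<times> FP s) F \<le> 1"
  shows "l2norm (FP s \<times> FP s) (Omega_bar s F) \<le> 1/2 + 1 / sqrt (real s)"
proof -
  let ?S = "FP s \<times> FP s"
  define N where "N = infsum (\<lambda>q. (norm (F q))\<^sup>2) ?S"
  define c where "c = 1/2 + 1 / sqrt (real s)"
  have c0: "c \<ge> 0" unfolding c_def by simp
  have N0: "N \<ge> 0" unfolding N_def by (simp add: infsum_nonneg)
  have FS: "(\<lambda>q. (norm (F q))\<^sup>2) summable_on ?S" using F unfolding l2_def by simp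
  from main_bound[OF s1 FS] have I: "infsum (\<lambda>p. (norm (Omega_bar s F p))\<^sup>2) ?S \<le> c\<^sup>2 * N"
    unfolding c_def N_def by simp
  have "sqrt N \<le> 1" using F(2) unfolding l2norm_def N_def by simp
  hence N1: "N \<le> 1" using N0 by simp
  have "l2norm ?S (Omega_bar s F) \<le> sqrt (c\<^sup>2 * N)"
    unfolding l2norm_def using I by simp
  also have "\<dots> = c * sqrt N" using c0 by (simp add: real_sqrt_mult)
  also have "\<dots> \<le> c * 1" using c0 \<open>sqrt N \<le> 1\<close> by (intro mult_left_mono) auto
  finally show ?thesis unfolding c_def by simp
qed

lemma zero_l2: "(\<lambda>_. 0) \<in> l2 S" unfolding l2_def by simp

lemma zero_l2norm: "l2norm S (\<lambda>_. 0) = 0" unfolding l2norm_def by simp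

lemma opnorm_bound:
  assumes s1: "s \<ge> 1"
  shows "opnorm (FP s \<times> FP s) (Omega_bar s) \<le> 1/2 + 1 / sqrt (real s)"
  unfolding opnorm_def
proof (rule cSup_least)
  show "{l2norm (FP s \<times> FP s) (Omega_bar s F) |F. F \<in> l2 (FP s \<times> FP s) \<and> l2norm (FP s \<times> FP s) F \<le> 1} \<noteq> {}"
    using zero_l2 zero_l2norm by (metis (mono_tags, lifting) empty_iff mem_Collect_eq order_refl zero_le_one)
  fix x assume "x \<in> {l2norm (FP s \<times> FP s) (Omega_bar s F) |F. F \<in> l2 (FP s \<times> FP s) \<and> l2norm (FP s \<times> FP s) F \<le> 1}"
  then obtain F where "x = l2norm (FP s \<times> FP s) (Omega_bar s F)" "F \<in> l2 (FP s \<times> FP s)" "l2norm (FP s \<times> FP s) F \<le> 1" by blast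
  thus "x \<le> 1/2 + 1 / sqrt (real s)" using elem_bound[OF s1] by blast
qed

lemma bdd_X:
  assumes s1: "s \<ge> 1"
  shows "bdd_above {l2norm (FP s \<times> FP s) (Omega_bar s F) | F. F \<in> l2 (FP s \<times> FP s) \<and> l2norm (FP s \<times> FP s) F \<le> 1}"
  using elem_bound[OF s1] unfolding bdd_above_def by blast

lemma mu_nonneg:
  assumes s1: "s \<ge> 1"
  shows "mu s \<ge> 0"
proof -
  have "l2norm (FP s \<times> FP s) (Omega_bar s (\<lambda>_. 0)) \<le> mu s"
    unfolding mu_def opnorm_def
    by (rule cSup_upper[OF _ bdd_X[OF s1]]) (use zero_l2 zero_l2norm in \<open>metis (mono_tags, lifting) mem_Collect_eq zero_le_one\<close>)
  thus ?thesis using l2norm_nonneg order_trans by blast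
qed

lemma op_bound:
  assumes s1: "s \<ge> 1" and F: "F \<in> l2 (FP s \<times> FP s)"
  shows "l2norm (FP s \<times> FP s) (Omega_bar s F) \<le> mu s * l2norm (FP s \<times> FP s) F"
proof -
  let ?S = "FP s \<times> FP s"
  define N where "N = infsum (\<lambda>q. (norm (F q))\<^sup>2) ?S"
  define I where "I = infsum (\<lambda>p. (norm (Omega_bar s F p))\<^sup>2) ?S"
  have N0: "N \<ge> 0" unfolding N_def by (simp add: infsum_nonneg)
  have I0: "I \<ge> 0" unfolding I_def by (simp add: infsum_nonneg)
  have FS: "(\<lambda>q. (norm (F q))\<^sup>2) summable_on ?S" using F unfolding l2_def by simp
  from main_bound[OF s1 FS] have IN: "I \<le> (1/2 + 1 / sqrt (real s))\<^sup>2 * N"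
    unfolding I_def N_def by simp
  define r where "r = l2norm ?S F"
  have r_eq: "r = sqrt N" unfolding r_def l2norm_def N_def ..
  show ?thesis
  proof (cases "N = 0")
    case True
    with IN I0 have "I = 0" by simp
    thus ?thesis using mu_nonneg[OF s1] l2norm_nonneg[of "FP s \<times> FP s" F] unfolding l2norm_def I_def by simp
  next
    case False
    with N0 have r0: "r > 0" unfolding r_eq by simp
    define F' where "F' p = F p / complex_of_real r" for p
    have nF': "(norm (F' q))\<^sup>2 = (norm (F q))\<^sup>2 / r\<^sup>2" for q
      unfolding F'_def using r0 by (simp add: norm_divide power_divide)
    have F'l2: "F' \<in> l2 ?S"
      using F unfolding l2_def F'_def
      by (auto simp: norm_divide power_divide intro!: summable_on_cmult_left[where c="1/r\<^sup>2", simplified])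
    have "l2norm ?S F' = sqrt (N / r\<^sup>2)"
      unfolding l2norm_def nF' N_def by (simp add: infsum_cmult_left'[where c="1/r\<^sup>2", simplified])
    also have "\<dots> = 1" using r0 N0 by (simp add: r_eq)
    finally have F'1: "l2norm ?S F' = 1" .
    have "l2norm ?S (Omega_bar s F') \<le> mu s"
      unfolding mu_def opnorm_def
      by (rule cSup_upper[OF _ bdd_X[OF s1]]) (use F'l2 F'1 in \<open>metis (mono_tags, lifting) mem_Collect_eq order_refl\<close>)
    moreover have "l2norm ?S (Omega_bar s F') = sqrt I / r"
    proof -
      have "(norm (Omega_bar s F' p))\<^sup>2 = (norm (Omega_bar s F p))\<^sup>2 / r\<^sup>2" if "p \<in> ?S" for p
      proof -
        have nz: "complex_of_real r \<noteq> 0" "complex_of_nat s \<noteq> 0" using r0 s1 by auto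
        have "Omega_bar s F' p = Omega_bar s F p / complex_of_real r"
          using nz unfolding Omega_bar_eq[OF that] F'_def
          by (simp add: sum_divide_distrib[symmetric] field_simps)
        thus ?thesis using r0 by (simp add: norm_divide power_divide)
      qed
      hence "l2norm ?S (Omega_bar s F') = sqrt (infsum (\<lambda>p. (norm (Omega_bar s F p))\<^sup>2 / r\<^sup>2) ?S)"
        unfolding l2norm_def by (metis (no_types, lifting) infsum_cong)
      also have "\<dots> = sqrt (I / r\<^sup>2)"
        unfolding I_def by (simp add: infsum_cmult_left'[where c="1/r\<^sup>2", simplified])
      also have "\<dots> = sqrt I / r" using r0 by (simp add: real_sqrt_divide)
      finally show ?thesis .
    qed
    ultimately have "sqrt I \<le> mu s * r" using r0 by (simp add: divide_le_eq)
    thus ?thesis unfolding l2norm_def I_def r_def by simp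
  qed
qed



lemma kmult_P_left:
  assumes "i < s" "x \<in> FP s"
  shows "kmult (FP s) (P_ker i sg) \<tau> x u = (\<tau> x u + sg * \<tau> (gen_mult i x) u) / 2"
  unfolding kmult_def
proof (subst infsum_two[where a=x and b="gen_mult i x"])
  show "x \<in> FP s" "gen_mult i x \<in> FP s" "x \<noteq> gen_mult i x"
    using assms gm_in gm_neq by metis+
  fix v assume v: "v \<in> FP s" "v \<noteq> x" "v \<noteq> gen_mult i x"
  have "x \<noteq> gen_mult i v" using v gm_inv by metis
  thus "P_ker i sg x v * \<tau> v u = 0" using v by (simp add: P_ker_def id_ker_def lam_ker_def)
next
  have "x \<noteq> gen_mult i x" "x = gen_mult i (gen_mult i x)" using assms gm_neq gm_inv by metis+
  thus "P_ker i sg x x * \<tau> x u + P_ker i sg x (gen_mult i x) * \<tau> (gen_mult i x) u =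
    (\<tau> x u + sg * \<tau> (gen_mult i x) u) / 2"
    by (simp add: P_ker_def id_ker_def lam_ker_def field_simps)
qed

lemma kmult_P_right:
  assumes "i < s" "y \<in> FP s"
  shows "kmult (FP s) M (P_ker i sg) x y = (M x y + sg * M x (gen_mult i y)) / 2"
  unfolding kmult_def
proof (subst infsum_two[where a=y and b="gen_mult i y"])
  show "y \<in> FP s" "gen_mult i y \<in> FP s" "y \<noteq> gen_mult i y"
    using assms gm_in gm_neq by metis+
  fix v assume v: "v \<in> FP s" "v \<noteq> y" "v \<noteq> gen_mult i y"
  thus "M x v * P_ker i sg v y = 0" by (simp add: P_ker_def id_ker_def lam_ker_def)
next
  have "y \<noteq> gen_mult i y" using gm_neq by metis
  thus "M x y * P_ker i sg y y + M x (gen_mult i y) * P_ker i sg (gen_mult i y) y =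
    (M x y + sg * M x (gen_mult i y)) / 2"
    by (simp add: P_ker_def id_ker_def lam_ker_def field_simps)
qed

lemma Omega_eq:
  assumes s1: "s \<ge> 1" and xy: "x \<in> FP s" "y \<in> FP s"
  shows "Omega s \<tau> x y = (1/2) * ((1 / of_nat s) * (\<Sum>i<s. \<tau> (gen_mult i x) (gen_mult i y)) + \<tau> x y)"
proof -
  have t: "kmult (FP s) (kmult (FP s) (P_ker i 1) \<tau>) (P_ker i 1) x y
    + kmult (FP s) (kmult (FP s) (P_ker i (-1)) \<tau>) (P_ker i (-1)) x y
    = (\<tau> x y + \<tau> (gen_mult i x) (gen_mult i y)) / 2" if "i < s" for i
    using that xy by (simp add: kmult_P_right kmult_P_left field_simps)
  have "Omega s \<tau> x y = (1 / of_nat s) * (\<Sum>i<s. (\<tau> x y + \<tau> (gen_mult i x) (gen_mult i y)) / 2)"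
  proof -
    have "(\<Sum>i<s. kmult (FP s) (kmult (FP s) (P_ker i 1) \<tau>) (P_ker i 1) x y
    + kmult (FP s) (kmult (FP s) (P_ker i (-1)) \<tau>) (P_ker i (-1)) x y) = (\<Sum>i<s. (\<tau> x y + \<tau> (gen_mult i x) (gen_mult i y)) / 2)"
      by (rule sum.cong) (simp_all only: t lessThan_iff)
    thus ?thesis unfolding Omega_def by simp
  qed
  also have "\<dots> = (1 / of_nat s) * ((of_nat s * \<tau> x y + (\<Sum>i<s. \<tau> (gen_mult i x) (gen_mult i y))) / 2)"
    by (simp add: sum_divide_distrib[symmetric] sum.distrib)
  also have "\<dots> = (1/2) * ((1 / of_nat s) * (\<Sum>i<s. \<tau> (gen_mult i x) (gen_mult i y)) + \<tau> x y)"
    using s1 by (simp add: field_simps)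
  finally show ?thesis .
qed

definition kvec :: "nat \<Rightarrow> (nat list \<Rightarrow> nat list \<Rightarrow> complex) \<Rightarrow> nat list \<times> nat list \<Rightarrow> complex" where
  "kvec s \<tau> p = (if p \<in> FP s \<times> FP s then \<tau> (fst p) (snd p) else 0)"

definition herm :: "nat \<Rightarrow> (nat list \<Rightarrow> nat list \<Rightarrow> complex) \<Rightarrow> bool" where
  "herm s \<tau> \<longleftrightarrow> (\<forall>x\<in>FP s. \<forall>y\<in>FP s. \<tau> y x = cnj (\<tau> x y))"

lemma vec_Omega:
  assumes s1: "s \<ge> 1" and p: "p \<in> FP s \<times> FP s"
  shows "kvec s (Omega s \<tau>) p = Omega_bar s (kvec s \<tau>) p"
proof -
  have "(\<Sum>i<s. kvec s \<tau> (phi i p)) = (\<Sum>i<s. \<tau> (gen_mult i (fst p)) (gen_mult i (snd p)))"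
    by (rule sum.cong) (use phi_in[OF _ p] in \<open>auto simp: kvec_def phi_def\<close>)
  note sc = this
  have pp: "fst p \<in> FP s" "snd p \<in> FP s" using p by auto
  have "kvec s (Omega s \<tau>) p = Omega s \<tau> (fst p) (snd p)" using p by (simp add: kvec_def)
  also have "\<dots> = (1/2) * ((1 / of_nat s) * (\<Sum>i<s. \<tau> (gen_mult i (fst p)) (gen_mult i (snd p))) + \<tau> (fst p) (snd p))"
    by (rule Omega_eq[OF s1 pp])
  also have "\<dots> = (1/2) * ((1 / of_nat s) * (\<Sum>i<s. kvec s \<tau> (phi i p)) + kvec s \<tau> p)"
    using p by (simp only: sc) (simp add: kvec_def)
  also have "\<dots> = Omega_bar s (kvec s \<tau>) p" by (rule Omega_bar_eq[OF p, symmetric])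
  finally show ?thesis .
qed

lemma herm_Omega:
  assumes s1: "s \<ge> 1" and h: "herm s \<tau>"
  shows "herm s (Omega s \<tau>)"
  unfolding herm_def
proof (intro ballI)
  fix x y assume xy: "x \<in> FP s" "y \<in> FP s"
  have hh: "\<And>u v. u \<in> FP s \<Longrightarrow> v \<in> FP s \<Longrightarrow> \<tau> v u = cnj (\<tau> u v)" using h unfolding herm_def by blast
  have e: "(\<Sum>i<s. \<tau> (gen_mult i y) (gen_mult i x)) = (\<Sum>i<s. cnj (\<tau> (gen_mult i x) (gen_mult i y)))"
  proof (rule sum.cong)
    fix i assume "i \<in> {..<s}"
    hence "gen_mult i x \<in> FP s" "gen_mult i y \<in> FP s" using gm_in xy by auto
    thus "\<tau> (gen_mult i y) (gen_mult i x) = cnj (\<tau> (gen_mult i x) (gen_mult i y))" by (rule hh)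
  qed simp
  have "Omega s \<tau> y x = (1/2) * ((1 / of_nat s) * (\<Sum>i<s. \<tau> (gen_mult i y) (gen_mult i x)) + \<tau> y x)"
    by (rule Omega_eq[OF s1 xy(2,1)])
  also have "\<dots> = (1/2) * ((1 / of_nat s) * (\<Sum>i<s. cnj (\<tau> (gen_mult i x) (gen_mult i y))) + cnj (\<tau> x y))"
    by (simp only: e hh[OF xy])
  also have "\<dots> = cnj ((1/2) * ((1 / of_nat s) * (\<Sum>i<s. \<tau> (gen_mult i x) (gen_mult i y)) + \<tau> x y))"
    by (simp add: cnj_sum)
  also have "\<dots> = cnj (Omega s \<tau> x y)" by (simp only: Omega_eq[OF s1 xy])
  finally show "Omega s \<tau> y x = cnj (Omega s \<tau> x y)" .
qed

lemma infsum_of_real':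
  assumes "f summable_on A"
  shows "infsum (\<lambda>x. complex_of_real (f x)) A = complex_of_real (infsum f A)"
  by (rule infsumI[OF has_sum_of_real[OF has_sum_infsum[OF assms]]])

lemma tr_sq_eq:
  assumes h: "herm s \<tau>" and l: "kvec s \<tau> \<in> l2 (FP s \<times> FP s)"
  shows "tr_sq (FP s) \<tau> = (l2norm (FP s \<times> FP s) (kvec s \<tau>))\<^sup>2"
proof -
  let ?S = "FP s \<times> FP s"
  have sm: "(\<lambda>p. (norm (kvec s \<tau> p))\<^sup>2) summable_on ?S" using l unfolding l2_def by simp
  have "infsum (\<lambda>(x,y). \<tau> x y * \<tau> y x) ?S = infsum (\<lambda>p. complex_of_real ((norm (kvec s \<tau> p))\<^sup>2)) ?S"
  proof (rule infsum_cong)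
    fix p assume p: "p \<in> ?S"
    obtain x y where pxy: "p = (x,y)" by (cases p)
    have xy: "x \<in> FP s" "y \<in> FP s" using p pxy by auto
    have c: "\<tau> y x = cnj (\<tau> x y)" using h xy unfolding herm_def by blast
    have k: "kvec s \<tau> (x,y) = \<tau> x y" using xy unfolding kvec_def by simp
    have "complex_of_real ((norm (\<tau> x y))\<^sup>2) = \<tau> x y * cnj (\<tau> x y)"
      by (rule complex_norm_square)
    thus "(case p of (x, y) \<Rightarrow> \<tau> x y * \<tau> y x) = complex_of_real ((norm (kvec s \<tau> p))\<^sup>2)"
      unfolding pxy k using c by simp
  qed
  also have "\<dots> = complex_of_real (infsum (\<lambda>p. (norm (kvec s \<tau> p))\<^sup>2) ?S)"
    by (rule infsum_of_real'[OF sm])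
  finally have "tr_sq (FP s) \<tau> = infsum (\<lambda>p. (norm (kvec s \<tau> p))\<^sup>2) ?S"
    unfolding tr_sq_def by simp
  moreover have "infsum (\<lambda>p. (norm (kvec s \<tau> p))\<^sup>2) ?S \<ge> 0" by (rule infsum_nonneg) simp
  ultimately show ?thesis unfolding l2norm_def by simp
qed



lemma quad_le:
  fixes A C n :: real
  assumes q: "\<And>t. 0 \<le> A*t\<^sup>2*n - 2*t*n + C" and A: "A \<ge> 0" and C: "C \<ge> 0" and n: "n \<ge> 0"
  shows "n \<le> A*C"
proof (cases "n = 0")
  case True thus ?thesis using A C by simp
next
  case False
  hence n0: "n > 0" using n by simp
  show ?thesis
  proof (cases "A = 0")
    case True
    have "0 \<le> A*((C+1)/(2*n))\<^sup>2*n - 2*((C+1)/(2*n))*n + C" by (rule q)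
    thus ?thesis using True n0 by simp
  next
    case False
    hence A0: "A > 0" using A by simp
    have "0 \<le> A*(1/A)\<^sup>2*n - 2*(1/A)*n + C" by (rule q)
    hence "0 \<le> C - n / A" using A0 by (simp add: power2_eq_square field_simps)
    thus ?thesis using A0 by (simp add: field_simps)
  qed
qed

lemma dens_H: "density_op G \<sigma> \<Longrightarrow> \<forall>x y. \<sigma> y x = cnj (\<sigma> x y)"
  unfolding density_op_def by (rule conjunct1[OF conjunct2])
lemma dens_P: "density_op G \<sigma> \<Longrightarrow> (\<forall>A f. finite A \<longrightarrow> A \<subseteq> G \<longrightarrow>
        0 \<le> Re (\<Sum>x\<in>A. \<Sum>y\<in>A. cnj (f x) * \<sigma> x y * f y))"
  unfolding density_op_def by (rule conjunct1[OF conjunct2[OF conjunct2]])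
lemma dens_S: "density_op G \<sigma> \<Longrightarrow> (\<lambda>x. \<sigma> x x) summable_on G"
  unfolding density_op_def by (rule conjunct1[OF conjunct2[OF conjunct2[OF conjunct2]]])
lemma dens_T: "density_op G \<sigma> \<Longrightarrow> (\<Sum>\<^sub>\<infinity>x\<in>G. \<sigma> x x) = 1"
  unfolding density_op_def by (rule conjunct2[OF conjunct2[OF conjunct2[OF conjunct2]]])

lemma dens_herm: "density_op (FP s) \<sigma> \<Longrightarrow> herm s \<sigma>"
  unfolding herm_def using dens_H by blast

lemma dens_diag:
  assumes d: "density_op G \<sigma>" and x: "x \<in> G"
  shows "\<sigma> x x = complex_of_real (Re (\<sigma> x x)) \<and> Re (\<sigma> x x) \<ge> 0"
proof
  have "\<sigma> x x = cnj (\<sigma> x x)" using dens_H[OF d] by blast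
  hence "Im (\<sigma> x x) = Im (cnj (\<sigma> x x))" by simp
  hence "Im (\<sigma> x x) = 0" by simp
  thus "\<sigma> x x = complex_of_real (Re (\<sigma> x x))" by (simp add: complex_eq_iff)
  have "0 \<le> Re (\<Sum>a\<in>{x}. \<Sum>b\<in>{x}. cnj ((\<lambda>_. 1) a) * \<sigma> a b * (\<lambda>_. 1) b)"
    using dens_P[OF d, rule_format, of "{x}" "\<lambda>_. 1"] x by simp
  thus "Re (\<sigma> x x) \<ge> 0" by simp
qed

lemma dens_off:
  assumes d: "density_op G \<sigma>" and x: "x \<in> G" and y: "y \<in> G" and xy: "x \<noteq> y"
  shows "(norm (\<sigma> x y))\<^sup>2 \<le> Re (\<sigma> x x) * Re (\<sigma> y y)"
proof -
  define ax where "ax = Re (\<sigma> x x)"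
  define ay where "ay = Re (\<sigma> y y)"
  define b where "b = \<sigma> x y"
  have sx: "\<sigma> x x = complex_of_real ax" and ax0: "ax \<ge> 0" using dens_diag[OF d x] unfolding ax_def by auto
  have sy: "\<sigma> y y = complex_of_real ay" and ay0: "ay \<ge> 0" using dens_diag[OF d y] unfolding ay_def by auto
  have syx: "\<sigma> y x = cnj b" using dens_H[OF d] unfolding b_def by blast
  show ?thesis unfolding ax_def[symmetric] ay_def[symmetric] b_def[symmetric]
  proof (rule quad_le[OF _ ax0 ay0])
    fix t :: real
    define f where "f z = (if z = x then - (complex_of_real t * b) else 1)" for z
    have "0 \<le> Re (\<Sum>u\<in>{x,y}. \<Sum>v\<in>{x,y}. cnj (f u) * \<sigma> u v * f v)"
      using dens_P[OF d, rule_format, of "{x,y}" f] x y by simp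
    also have "Re (\<Sum>u\<in>{x,y}. \<Sum>v\<in>{x,y}. cnj (f u) * \<sigma> u v * f v) = ax * t\<^sup>2 * (norm b)\<^sup>2 - 2 * t * (norm b)\<^sup>2 + ay"
    proof -
      have fx: "f x = - (complex_of_real t * b)" and fy: "f y = 1" using xy unfolding f_def by auto
      have e1: "(\<Sum>u\<in>{x,y}. \<Sum>v\<in>{x,y}. cnj (f u) * \<sigma> u v * f v) =
        cnj (f x) * \<sigma> x x * f x + cnj (f x) * \<sigma> x y * f y + (cnj (f y) * \<sigma> y x * f x + cnj (f y) * \<sigma> y y * f y)"
        using xy by simp
      have bb: "cnj b * b = complex_of_real ((norm b)\<^sup>2)"
        using complex_norm_square[of b] by (simp add: mult.commute)
      have "cnj (f x) * \<sigma> x x * f x + cnj (f x) * \<sigma> x y * f y + (cnj (f y) * \<sigma> y x * f x + cnj (f y) * \<sigma> y y * f y)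
        = complex_of_real t * complex_of_real t * complex_of_real ax * (cnj b * b) - 2 * complex_of_real t * (cnj b * b) + complex_of_real ay"
        unfolding fx fy sx sy syx b_def[symmetric] by (simp add: algebra_simps)
      also have "\<dots> = complex_of_real (ax * t\<^sup>2 * (norm b)\<^sup>2 - 2 * t * (norm b)\<^sup>2 + ay)"
        unfolding bb by (simp add: power2_eq_square algebra_simps)
      finally show ?thesis unfolding e1 by (simp only: Re_complex_of_real)
    qed
    finally show "0 \<le> ax * t\<^sup>2 * (norm b)\<^sup>2 - 2 * t * (norm b)\<^sup>2 + ay" .
  qed simp
qed

lemma dens_l2:
  assumes d: "density_op (FP s) \<sigma>"
  shows "kvec s \<sigma> \<in> l2 (FP s \<times> FP s) \<and> infsum (\<lambda>p. (norm (kvec s \<sigma> p))\<^sup>2) (FP s \<times> FP s) \<le> 1"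
proof -
  let ?G = "FP s" let ?S = "FP s \<times> FP s"
  define a where "a x = Re (\<sigma> x x)" for x
  have aS: "a summable_on ?G" unfolding a_def by (rule summable_on_Re[OF dens_S[OF d]])
  have aI: "infsum a ?G = 1" unfolding a_def using infsum_Re[OF dens_S[OF d]] dens_T[OF d] by simp
  have a0: "x \<in> ?G \<Longrightarrow> a x \<ge> 0" for x using dens_diag[OF d] unfolding a_def by blast
  have pw: "(norm (kvec s \<sigma> p))\<^sup>2 \<le> a (fst p) * a (snd p)" if p: "p \<in> ?S" for p
  proof -
    obtain x y where pxy: "p = (x,y)" by (cases p)
    have xy: "x \<in> ?G" "y \<in> ?G" using p pxy by auto
    have k: "kvec s \<sigma> (x,y) = \<sigma> x y" using xy unfolding kvec_def by simp
    show ?thesis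
    proof (cases "x = y")
      case True
      have "\<sigma> x x = complex_of_real (a x)" using dens_diag[OF d xy(1)] unfolding a_def by blast
      moreover have "kvec s \<sigma> p = \<sigma> x x" using k pxy True by simp
      ultimately show ?thesis using pxy True by (simp add: power2_eq_square abs_mult_self_eq)
    next
      case False
      thus ?thesis unfolding pxy k a_def using dens_off[OF d xy False] by simp
    qed
  qed
  have fa: "sum a B \<le> 1" if "finite B" "B \<subseteq> ?G" for B
    using finite_sum_le_infsum[OF aS that] a0 aI by auto
  have fb: "sum (\<lambda>p. (norm (kvec s \<sigma> p))\<^sup>2) F \<le> 1" if F: "finite F" "F \<subseteq> ?S" for F
  proof -
    have "sum (\<lambda>p. (norm (kvec s \<sigma> p))\<^sup>2) F \<le> sum (\<lambda>p. a (fst p) * a (snd p)) F"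
      by (rule sum_mono) (use pw F in auto)
    also have "\<dots> \<le> sum (\<lambda>p. a (fst p) * a (snd p)) (fst ` F \<times> snd ` F)"
    proof (rule sum_mono2)
      show "finite (fst ` F \<times> snd ` F)" using F by simp
      show "F \<subseteq> fst ` F \<times> snd ` F" by (auto intro: rev_image_eqI)
      fix b assume "b \<in> fst ` F \<times> snd ` F - F"
      hence "fst b \<in> ?G" "snd b \<in> ?G" using F by auto
      thus "0 \<le> a (fst b) * a (snd b)" using a0 by simp
    qed
    also have "\<dots> = sum a (fst ` F) * sum a (snd ` F)"
      by (simp add: sum_product sum.cartesian_product case_prod_beta)
    also have "\<dots> \<le> 1 * 1"
      using F fa[of "fst ` F"] fa[of "snd ` F"] a0 fst_image_times snd_image_times
        image_mono[OF F(2), of fst] image_mono[OF F(2), of snd]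
      by (intro mult_mono) (auto intro!: sum_nonneg)
    finally show ?thesis by simp
  qed
  have sm: "(\<lambda>p. (norm (kvec s \<sigma> p))\<^sup>2) summable_on ?S"
    by (rule nonneg_bdd_above_summable_on) (use fb in \<open>auto intro!: bdd_aboveI[where M=1]\<close>)
  have "infsum (\<lambda>p. (norm (kvec s \<sigma> p))\<^sup>2) ?S \<le> 1"
    by (rule infsum_le_finite_sums[OF sm fb])
  moreover have "kvec s \<sigma> \<in> l2 ?S" unfolding l2_def using sm by (auto simp: kvec_def)
  ultimately show ?thesis by simp
qed



theorem mainTheorem5:
  fixes s :: nat
  assumes "s \<ge> 1"
  shows "opnorm (FP s \<times> FP s) (Omega_bar s) \<le> 1/2 + 1 / sqrt (real s) \<and>
    (s \<ge> 5 \<longrightarrow> mu s < 1 \<and>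
       (\<forall>\<sigma> (N::nat). density_op (FP s) \<sigma> \<longrightarrow>
          tr_sq (FP s) ((Omega s ^^ N) \<sigma>) \<le> mu s ^ (2*N) * tr_sq (FP s) \<sigma> \<and>
          mu s ^ (2*N) * tr_sq (FP s) \<sigma> \<le> mu s ^ (2*N)))"
proof -
  have s1: "s \<ge> 1" by (rule assms)
  let ?S = "FP s \<times> FP s"
  have ob: "opnorm ?S (Omega_bar s) \<le> 1/2 + 1 / sqrt (real s)" by (rule opnorm_bound[OF s1])
  have mu0: "mu s \<ge> 0" by (rule mu_nonneg[OF s1])
  have dens: "tr_sq (FP s) ((Omega s ^^ N) \<sigma>) \<le> mu s ^ (2*N) * tr_sq (FP s) \<sigma> \<and>
          mu s ^ (2*N) * tr_sq (FP s) \<sigma> \<le> mu s ^ (2*N)" if d: "density_op (FP s) \<sigma>" for \<sigma> N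
  proof -
    define \<tau> where "\<tau> n = (Omega s ^^ n) \<sigma>" for n
    define L where "L = l2norm ?S (kvec s \<sigma>)"
    have L0: "L \<ge> 0" unfolding L_def by (rule l2norm_nonneg)
    have dl: "kvec s \<sigma> \<in> l2 ?S" "infsum (\<lambda>p. (norm (kvec s \<sigma> p))\<^sup>2) ?S \<le> 1"
      using dens_l2[OF d] by auto
    have inv: "herm s (\<tau> n) \<and> kvec s (\<tau> n) \<in> l2 ?S \<and> l2norm ?S (kvec s (\<tau> n)) \<le> mu s ^ n * L" for n
    proof (induction n)
      case 0
      show ?case unfolding \<tau>_def L_def using dens_herm[OF d] dl by simp
    next
      case (Suc n)
      have ts: "\<tau> (Suc n) = Omega s (\<tau> n)" unfolding \<tau>_def by simp
      have eq: "kvec s (\<tau> (Suc n)) p = Omega_bar s (kvec s (\<tau> n)) p" if "p \<in> ?S" for p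
        unfolding ts by (rule vec_Omega[OF s1 that])
      have FS: "(\<lambda>q. (norm (kvec s (\<tau> n) q))\<^sup>2) summable_on ?S"
        using Suc.IH unfolding l2_def by simp
      have OS: "(\<lambda>p. (norm (Omega_bar s (kvec s (\<tau> n)) p))\<^sup>2) summable_on ?S"
        using main_bound[OF s1 FS] by simp
      have S1: "(\<lambda>p. (norm (kvec s (\<tau> (Suc n)) p))\<^sup>2) summable_on ?S"
        using OS by (rule summable_on_cong[THEN iffD2, rotated]) (simp add: eq)
      have l2s: "kvec s (\<tau> (Suc n)) \<in> l2 ?S" unfolding l2_def using S1 by (auto simp: kvec_def)
      have "l2norm ?S (kvec s (\<tau> (Suc n))) = l2norm ?S (Omega_bar s (kvec s (\<tau> n)))"
        unfolding l2norm_def by (simp add: eq cong: infsum_cong)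
      also have "\<dots> \<le> mu s * l2norm ?S (kvec s (\<tau> n))"
        by (rule op_bound[OF s1]) (use Suc.IH in blast)
      also have "\<dots> \<le> mu s * (mu s ^ n * L)"
        using Suc.IH mu0 by (intro mult_left_mono) auto
      finally have "l2norm ?S (kvec s (\<tau> (Suc n))) \<le> mu s ^ Suc n * L" by simp
      moreover have "herm s (\<tau> (Suc n))" unfolding ts using herm_Omega[OF s1] Suc.IH by blast
      ultimately show ?case using l2s by blast
    qed
    have trs: "tr_sq (FP s) \<sigma> = L\<^sup>2" unfolding L_def
      by (rule tr_sq_eq[OF dens_herm[OF d] dl(1)])
    have trN: "tr_sq (FP s) (\<tau> N) = (l2norm ?S (kvec s (\<tau> N)))\<^sup>2"
      using inv[of N] tr_sq_eq by blast
    also have "\<dots> \<le> (mu s ^ N * L)\<^sup>2"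
      using inv[of N] l2norm_nonneg by (intro power_mono) auto
    also have "\<dots> = mu s ^ (2*N) * tr_sq (FP s) \<sigma>"
      unfolding trs by (simp add: power_mult_distrib power_mult[symmetric] mult.commute)
    finally have A: "tr_sq (FP s) ((Omega s ^^ N) \<sigma>) \<le> mu s ^ (2*N) * tr_sq (FP s) \<sigma>"
      unfolding \<tau>_def .
    have "L\<^sup>2 \<le> 1" unfolding L_def l2norm_def using dl(2) by (simp add: infsum_nonneg)
    hence "mu s ^ (2*N) * tr_sq (FP s) \<sigma> \<le> mu s ^ (2*N) * 1"
      unfolding trs using mu0 by (intro mult_left_mono) auto
    with A show ?thesis by simp
  qed
  have mu1: "mu s < 1" if "s \<ge> 5"
  proof -
    have "sqrt (real s) > 2"
      using that real_sqrt_less_iff[of 4 "real s"] by (simp add: real_sqrt_four)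
    hence "1 / sqrt (real s) < 1/2" by (simp add: divide_less_eq)
    thus ?thesis using ob unfolding mu_def by linarith
  qed
  show ?thesis using ob mu1 dens by blast
qed

end
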